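(* Fix $H\in(3/4,1)$, $\mu\in\mathbb{R}$, $\sigma>0$. For $\alpha>0$ let $Q^{\alpha}$ be the law on $\mathcal{C}[0,1]$ of $\alpha Z^H_t+B_t$, $t\in[0,1]$, where $B$ is a standard Brownian motion and $Z^H$ an independent fractional Brownian motion with Hurst parameter $H$, and let $Q_{\mu\alpha/\sigma}$ be the law on $\mathcal{C}[0,1]$ of $W_t-\frac{\mu\alpha}{\sigma}t$, $W$ a standard Brownian motion. For $n\ge1$ let $Y_n(\omega)=(\omega(\tfrac1n)-\omega(0),\dots,\omega(1)-\omega(\tfrac{n-1}n))^T$ and let $Q^{\alpha,n}$, $Q^n_{\mu\alpha/\sigma}$ be the restrictions of $Q^\alpha$, $Q_{\mu\alpha/\sigma}$ to $\sigma(Y_n)$. Then for every $n>1$, $$\lim_{\alpha\to\infty}H\big(Q^{\alpha,n}\,|\,Q^n_{\mu\alpha/\sigma}\big)=\infty.$$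
   Context: $H(Q_1|Q_2)$ denotes the relative entropy of $Q_1$ with respect to $Q_2$: the supremum over finite measurable partitions $\{F_j\}$ of $\sum_j Q_1(F_j)\ln(Q_1(F_j)/Q_2(F_j))$; when $Q_1\ll Q_2$ it equals $E_{Q_1}[\ln\frac{dQ_1}{dQ_2}]$. A fractional Brownian motion with Hurst parameter $H$ is a continuous centred Gaussian process with covariance $\frac12(t^{2H}+s^{2H}-|t-s|^{2H})$. *)

theory Defs
  imports "HOL-Probability.Probability"
begin

(* Only finitely many coordinates enter sigma(Y_n), so restricting the
   law on C[0,1] to sigma(Y_n) gives the same measure as here. *)
definition path_space :: "(real \<Rightarrow> real) measure" where
  "path_space = PiM {0..1} (\<lambda>_. borel)"

definition incr_vec :: "nat \<Rightarrow> (real \<Rightarrow> real) \<Rightarrow> (nat \<Rightarrow> real)" where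
  "incr_vec n \<omega> = (\<lambda>i\<in>{..<n}. \<omega> (real (Suc i) / real n) - \<omega> (real i / real n))"

definition incr_sigma :: "nat \<Rightarrow> (real \<Rightarrow> real) measure" where
  "incr_sigma n = vimage_algebra (space path_space) (incr_vec n) (PiM {..<n} (\<lambda>_. borel))"

definition kl_term :: "real \<Rightarrow> real \<Rightarrow> ereal" where
  "kl_term p q = (if p = 0 then 0 else if q = 0 then \<infinity> else ereal (p * ln (p / q)))"

definition finite_meas_partition :: "'a measure \<Rightarrow> 'a set set \<Rightarrow> bool" where
  "finite_meas_partition M P \<longleftrightarrow> finite P \<and> P \<subseteq> sets M \<and> disjoint P \<and> \<Union>P = space M"

definition rel_entropy :: "'a measure \<Rightarrow> 'a measure \<Rightarrow> ereal" where
  "rel_entropy Q1 Q2 = (SUP P \<in> {P. finite_meas_partition Q1 P}.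
       \<Sum>F\<in>P. kl_term (measure Q1 F) (measure Q2 F))"

definition centered_gaussian_process ::
  "'a measure \<Rightarrow> real set \<Rightarrow> (real \<Rightarrow> 'a \<Rightarrow> real) \<Rightarrow> (real \<Rightarrow> real \<Rightarrow> real) \<Rightarrow> bool" where
  "centered_gaussian_process M T X K \<longleftrightarrow>
     (\<forall>t\<in>T. X t \<in> borel_measurable M) \<and>
     (\<forall>I c. finite I \<and> I \<subseteq> T \<longrightarrow>
        (let Y = (\<lambda>\<omega>. \<Sum>t\<in>I. c t * X t \<omega>);
             v = (\<Sum>s\<in>I. \<Sum>t\<in>I. c s * c t * K s t)
         in if v = 0 then (AE \<omega> in M. Y \<omega> = 0)
            else distributed M lborel Y (normal_density 0 (sqrt v))))"

definition continuous_paths :: "'a measure \<Rightarrow> (real \<Rightarrow> 'a \<Rightarrow> real) \<Rightarrow> bool" where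
  "continuous_paths M X \<longleftrightarrow> (\<forall>\<omega>\<in>space M. continuous_on {0..1} (\<lambda>t. X t \<omega>))"

definition std_BM :: "'a measure \<Rightarrow> (real \<Rightarrow> 'a \<Rightarrow> real) \<Rightarrow> bool" where
  "std_BM M B \<longleftrightarrow> centered_gaussian_process M {0..1} B (\<lambda>s t. min s t) \<and> continuous_paths M B"

definition fBM :: "real \<Rightarrow> 'a measure \<Rightarrow> (real \<Rightarrow> 'a \<Rightarrow> real) \<Rightarrow> bool" where
  "fBM H M Z \<longleftrightarrow> centered_gaussian_process M {0..1} Z
      (\<lambda>s t. (t powr (2*H) + s powr (2*H) - \<bar>t - s\<bar> powr (2*H)) / 2) \<and> continuous_paths M Z"

definition path_of :: "(real \<Rightarrow> 'a \<Rightarrow> real) \<Rightarrow> 'a \<Rightarrow> (real \<Rightarrow> real)" where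
  "path_of X \<omega> = (\<lambda>t\<in>{0..1}. X t \<omega>)"

end

theory Submission
  imports Defs
begin


lemma tail_small:
  fixes X :: "_ \<Rightarrow> real"
  assumes "prob_space M" "X \<in> borel_measurable M" "\<epsilon> > 0"
  shows "\<exists>T. \<forall>t\<ge>T. measure M {\<omega>\<in>space M. t < \<bar>X \<omega>\<bar>} < \<epsilon>"
proof -
  interpret prob_space M by fact
  define A where "A i = {\<omega>\<in>space M. real i < \<bar>X \<omega>\<bar>}" for i :: nat
  have "A i \<in> sets M" for i unfolding A_def using assms(2) by measurable
  then have r: "range A \<subseteq> sets M" by auto
  have d: "decseq A" unfolding A_def decseq_def by auto
  have "(\<Inter>i. A i) = {}"
  proof (safe)
    fix x assume "x \<in> (\<Inter>i. A i)"
    then have "real (nat \<lceil>\<bar>X x\<bar>\<rceil>) < \<bar>X x\<bar>" unfolding A_def by blast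
    then show "x \<in> {}" by linarith
  qed
  then have "(\<lambda>i. measure M (A i)) \<longlonglongrightarrow> 0" using finite_Lim_measure_decseq[OF r d] by simp
  then obtain N where "\<forall>i\<ge>N. norm (measure M (A i) - 0) < \<epsilon>" using assms(3) LIMSEQ_D by blast
  then have N: "measure M (A N) < \<epsilon>" by auto
  show ?thesis
  proof (intro exI allI impI)
    fix t :: real assume "real N \<le> t"
    have "measure M {\<omega>\<in>space M. t < \<bar>X \<omega>\<bar>} \<le> measure M (A N)"
      unfolding A_def using \<open>real N \<le> t\<close> assms(2) by (intro finite_measure_mono) auto
    then show "measure M {\<omega>\<in>space M. t < \<bar>X \<omega>\<bar>} < \<epsilon>" using N by linarith
  qed
qed

lemma small_ball_small:
  fixes X :: "_ \<Rightarrow> real"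
  assumes "prob_space M" "X \<in> borel_measurable M" "\<epsilon> > 0"
    and "measure M {\<omega>\<in>space M. X \<omega> = x0} = 0"
  shows "\<exists>\<delta>>0. \<forall>e. e \<le> \<delta> \<longrightarrow> measure M {\<omega>\<in>space M. \<bar>X \<omega> - x0\<bar> \<le> e} < \<epsilon>"
proof -
  interpret prob_space M by fact
  define A where "A i = {\<omega>\<in>space M. \<bar>X \<omega> - x0\<bar> \<le> 1 / real (Suc i)}" for i :: nat
  have "A i \<in> sets M" for i unfolding A_def using assms(2) by measurable
  then have r: "range A \<subseteq> sets M" by auto
  have d: "decseq A" unfolding A_def decseq_def
    by (auto simp: frac_le order_trans)
  have "(\<Inter>i. A i) = {\<omega>\<in>space M. X \<omega> = x0}"
  proof (safe)
    fix x assume x: "x \<in> (\<Inter>i. A i)"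
    show "x \<in> space M" using x unfolding A_def by auto
    show "X x = x0"
    proof (rule ccontr)
      assume "X x \<noteq> x0"
      then have p: "\<bar>X x - x0\<bar> > 0" by simp
      obtain k where k: "1 / real (Suc k) < \<bar>X x - x0\<bar>" using reals_Archimedean[OF p] by (auto simp: inverse_eq_divide)
      have "x \<in> A k" using x by blast
      then show False using k unfolding A_def by auto
    qed
  qed (auto simp: A_def)
  then have "(\<lambda>i. measure M (A i)) \<longlonglongrightarrow> 0" using finite_Lim_measure_decseq[OF r d] assms(4) by simp
  then obtain N where "\<forall>i\<ge>N. norm (measure M (A i) - 0) < \<epsilon>" using assms(3) LIMSEQ_D by blast
  then have N: "measure M (A N) < \<epsilon>" by auto
  show ?thesis
  proof (intro exI conjI allI impI)
    show "1 / real (Suc N) > 0" by simp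
    fix e :: real assume "e \<le> 1 / real (Suc N)"
    have "measure M {\<omega>\<in>space M. \<bar>X \<omega> - x0\<bar> \<le> e} \<le> measure M (A N)"
      unfolding A_def using \<open>e \<le> _\<close> assms(2) by (intro finite_measure_mono) auto
    then show "measure M {\<omega>\<in>space M. \<bar>X \<omega> - x0\<bar> \<le> e} < \<epsilon>" using N by linarith
  qed
qed

lemma kl_lower:
  assumes "0 \<le> p" "0 \<le> q" "q \<le> 1" shows "kl_term p q \<ge> ereal (-1)"
proof (cases "p = 0 \<or> q = 0")
  case True then show ?thesis by (auto simp: kl_term_def)
next
  case False
  then have pq: "p > 0" "q > 0" using assms by auto
  have "ln (q / p) \<le> q / p - 1" using pq by (intro ln_le_minus_one) simp
  then have "ln (p / q) \<ge> 1 - q / p" using pq by (simp add: ln_div)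
  then have "p * ln (p / q) \<ge> p * (1 - q / p)" using pq by (intro mult_left_mono) auto
  also have "p * (1 - q / p) = p - q" using pq by (simp add: field_simps)
  finally have "p * ln (p / q) \<ge> -1" using assms by linarith
  then show ?thesis using False by (simp add: kl_term_def)
qed

lemma kl_big:
  assumes "1/2 \<le> p" "0 \<le> q" "q < exp (-2*K) / 2" "K > 0" shows "kl_term p q \<ge> ereal K"
proof (cases "q = 0")
  case True then show ?thesis using assms by (auto simp: kl_term_def)
next
  case False
  then have q: "q > 0" using assms by auto
  have "exp (2*K) < 1 / (2*q)" using assms(3) q by (simp add: exp_minus field_simps)
  also have "1 / (2*q) \<le> p / q" using assms q by (simp add: field_simps)
  finally have e: "exp (2*K) < p / q" .
  have "ln (exp (2*K)) < ln (p / q)" proof (subst ln_less_cancel_iff)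
    show "0 < p / q" using e exp_gt_zero[of "2*K"] by linarith
  qed (use e in auto)
  then have "2*K < ln (p / q)" by simp
  then have "(1/2) * (2*K) \<le> p * ln (p / q)" using assms
    by (intro mult_mono) auto
  then show ?thesis using q assms by (auto simp: kl_term_def)
qed



lemma key_ineq:
  fixes \<alpha> a b x0 d :: real
  assumes "\<alpha> > 0" "2 / sqrt \<alpha> < \<bar>a - x0\<bar>" "\<bar>b\<bar> \<le> sqrt \<alpha>" "d = - \<alpha> * x0"
  shows "sqrt \<alpha> < \<bar>\<alpha> * a + b + d\<bar>"
proof -
  have s: "sqrt \<alpha> > 0" using assms by simp
  have "\<alpha> * a + d = \<alpha> * (a - x0)" using assms(4) by (simp add: algebra_simps)
  have "\<alpha> * (2 / sqrt \<alpha>) < \<alpha> * \<bar>a - x0\<bar>" using assms by (intro mult_strict_left_mono) auto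
  moreover have "\<alpha> * (2 / sqrt \<alpha>) = 2 * sqrt \<alpha>" using s assms(1)
    by (metis less_eq_real_def real_div_sqrt times_divide_eq_right mult.commute)
  ultimately have "2 * sqrt \<alpha> < \<bar>\<alpha> * (a - x0)\<bar>" using assms(1) by (simp add: abs_mult)
  then show ?thesis using \<open>\<alpha> * a + d = _\<close> assms(3) by linarith
qed

lemma gauss_incr_nonatomic:
  assumes "centered_gaussian_process M {0..1} Z K"
    and "h \<in> {0..1}" "h \<noteq> 0" "K h h - K h 0 - K 0 h + K 0 0 \<noteq> 0"
  shows "measure M {\<omega>\<in>space M. Z h \<omega> - Z 0 \<omega> = x0} = 0"
proof -
  define c where "c t = (if t = h then 1 else (-1::real))" for t
  have I: "finite {h, 0}" "{h, 0::real} \<subseteq> {0..1}" using assms by auto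
  have v: "(\<Sum>s\<in>{h,0}. \<Sum>t\<in>{h,0}. c s * c t * K s t) = K h h - K h 0 - K 0 h + K 0 0"
    using assms(3) by (simp add: c_def)
  have sum: "(\<lambda>\<omega>. \<Sum>t\<in>{h,0}. c t * Z t \<omega>) = (\<lambda>\<omega>. Z h \<omega> - Z 0 \<omega>)"
    using assms(3) by (simp add: c_def)
  from assms(1) I have "distributed M lborel (\<lambda>\<omega>. Z h \<omega> - Z 0 \<omega>) (normal_density 0 (sqrt (K h h - K h 0 - K 0 h + K 0 0)))"
    unfolding centered_gaussian_process_def Let_def
    apply (elim conjE)
    apply (drule spec[of _ "{h,0}"], drule spec[of _ c])
    using assms(4) by (simp only: v sum) auto
  then have "emeasure M ((\<lambda>\<omega>. Z h \<omega> - Z 0 \<omega>) -` {x0} \<inter> space M) = 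
      (\<integral>\<^sup>+x. ennreal (normal_density 0 (sqrt (K h h - K h 0 - K 0 h + K 0 0)) x) * indicator {x0} x \<partial>lborel)"
    by (rule distributed_emeasure) simp
  also have "\<dots> = 0"
    by (rule nn_integral_null_set) (simp add: finite_imp_null_set_lborel)
  finally have "emeasure M ((\<lambda>\<omega>. Z h \<omega> - Z 0 \<omega>) -` {x0} \<inter> space M) = 0" by simp
  moreover have "(\<lambda>\<omega>. Z h \<omega> - Z 0 \<omega>) -` {x0} \<inter> space M = {\<omega>\<in>space M. Z h \<omega> - Z 0 \<omega> = x0}" by auto
  ultimately show ?thesis by (simp add: measure_def)
qed



lemma path_of_meas:
  assumes "\<And>t. t \<in> {0..1} \<Longrightarrow> X t \<in> borel_measurable M"
  shows "path_of X \<in> measurable M path_space"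
  unfolding path_of_def path_space_def by (rule measurable_restrict) (use assms in auto)

lemma incr_vec_meas: "incr_vec n \<in> measurable path_space (PiM {..<n} (\<lambda>_. borel))"
  unfolding incr_vec_def path_space_def
proof (rule measurable_restrict)
  fix i assume i: "i \<in> {..<n}"
  then have le: "real (Suc i) \<le> real n" "real i \<le> real n" "real n > 0" by auto
  have "real (Suc i) / real n \<le> 1" using le by (intro divide_le_eq_1_pos[THEN iffD2]) auto
  moreover have "real i / real n \<le> 1" using le by (intro divide_le_eq_1_pos[THEN iffD2]) auto
  ultimately have ab: "real (Suc i) / real n \<in> {0..1}" "real i / real n \<in> {0..1}" using le by auto
  have m: "\<And>a b. a \<in> {0..1} \<Longrightarrow> b \<in> {0..1} \<Longrightarrow> (\<lambda>x::real\<Rightarrow>real. x a - x b) \<in> borel_measurable (PiM {0..1::real} (\<lambda>_. borel))"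
    apply (intro borel_measurable_diff)
    apply (rule measurable_component_singleton[where M="\<lambda>_. borel", simplified], simp)
    apply (rule measurable_component_singleton[where M="\<lambda>_. borel", simplified], simp)
    done
  show "(\<lambda>x::real\<Rightarrow>real. x (real (Suc i) / real n) - x (real i / real n)) \<in> borel_measurable (PiM {0..1} (\<lambda>_. borel))"
    by (rule m[OF ab])
qed

lemma subalg_incr:
  assumes "f \<in> measurable M path_space"
  shows "subalgebra (distr M path_space f) (incr_sigma n)"
proof -
  have "space (vimage_algebra (space path_space) (incr_vec n) (PiM {..<n} (\<lambda>_. borel))) = space (distr M path_space f)"
    by simp
  moreover have "sets (vimage_algebra (space path_space) (incr_vec n) (PiM {..<n} (\<lambda>_. borel))) \<subseteq> sets (distr M path_space f)"
    using sets_image_in_sets[OF refl incr_vec_meas, of n] by simp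
  ultimately show ?thesis unfolding subalgebra_def incr_sigma_def by blast
qed

lemma measure_restr:
  assumes "subalgebra P F" "A \<in> sets F"
  shows "measure (restr_to_subalg P F) A = measure P A"
  using emeasure_restr_to_subalg[OF assms] by (simp add: measure_def)

lemma incr0: "n > 0 \<Longrightarrow> \<omega> \<in> space path_space \<Longrightarrow> incr_vec n \<omega> 0 = \<omega> (1 / real n) - \<omega> 0"
  by (simp add: incr_vec_def)



lemma set_lt_abs: assumes [measurable]: "f \<in> borel_measurable M" shows "{\<omega>\<in>space M. (c::real) < \<bar>f \<omega>\<bar>} \<in> sets M"
  by measurable

lemma set_le_abs: assumes [measurable]: "f \<in> borel_measurable M" shows "{\<omega>\<in>space M. \<bar>f \<omega>\<bar> \<le> (c::real)} \<in> sets M"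
  by measurable

lemma cgp_meas: "centered_gaussian_process M T X K \<Longrightarrow> t \<in> T \<Longrightarrow> X t \<in> borel_measurable M"
  unfolding centered_gaussian_process_def by blast

theorem lemma3p3:
  fixes H \<mu> \<sigma> :: real and M :: "'a measure" and N :: "'b measure"
    and B Z :: "real \<Rightarrow> 'a \<Rightarrow> real" and W :: "real \<Rightarrow> 'b \<Rightarrow> real" and n :: nat
  assumes "3/4 < H" "H < 1" "\<sigma> > 0"
    and "prob_space M" "std_BM M B" "fBM H M Z"
    and "prob_space.indep_var M path_space (path_of B) path_space (path_of Z)"
    and "prob_space N" "std_BM N W"
    and "n > 1"
  shows "((\<lambda>\<alpha>. rel_entropy
            (restr_to_subalg (distr M path_space (path_of (\<lambda>t \<omega>. \<alpha> * Z t \<omega> + B t \<omega>))) (incr_sigma n))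
            (restr_to_subalg (distr N path_space (path_of (\<lambda>t \<omega>. W t \<omega> - \<mu> * \<alpha> / \<sigma> * t))) (incr_sigma n)))
          \<longlongrightarrow> (\<infinity>::ereal)) at_top"
proof -
  interpret PM: prob_space M by fact
  interpret PN: prob_space N by fact
  define h where "h = 1 / real n"
  have h01: "h \<in> {0..1}" "h \<noteq> 0" "h > 0" using assms(10) by (auto simp: h_def)
  define x0 where "x0 = - (\<mu> / \<sigma> * h)"
  have Bm: "\<And>t. t \<in> {0..1} \<Longrightarrow> B t \<in> borel_measurable M"
    using assms(5) unfolding std_BM_def by (blast intro: cgp_meas)
  have Zm: "\<And>t. t \<in> {0..1} \<Longrightarrow> Z t \<in> borel_measurable M"
    using assms(6) unfolding fBM_def by (blast intro: cgp_meas)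
  have Wm: "\<And>t. t \<in> {0..1} \<Longrightarrow> W t \<in> borel_measurable N"
    using assms(9) unfolding std_BM_def by (blast intro: cgp_meas)
  have dZm: "(\<lambda>\<omega>. Z h \<omega> - Z 0 \<omega>) \<in> borel_measurable M" using Zm h01 by auto
  have dBm: "(\<lambda>\<omega>. B h \<omega> - B 0 \<omega>) \<in> borel_measurable M" using Bm h01 by auto
  have dWm: "(\<lambda>\<omega>. W h \<omega> - W 0 \<omega>) \<in> borel_measurable N" using Wm h01 by auto
  define KZ where "KZ = (\<lambda>s t::real. (t powr (2*H) + s powr (2*H) - \<bar>t - s\<bar> powr (2*H)) / 2)"
  have KZv: "KZ h h - KZ h 0 - KZ 0 h + KZ 0 0 \<noteq> 0" using h01 by (simp add: KZ_def)
  have Znull: "measure M {\<omega>\<in>space M. Z h \<omega> - Z 0 \<omega> = x0} = 0"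
  proof (rule gauss_incr_nonatomic)
    show "centered_gaussian_process M {0..1} Z KZ" using assms(6) unfolding fBM_def KZ_def by blast
  qed (use h01 KZv in auto)
  show ?thesis unfolding tendsto_PInfty
  proof
    fix r :: real
    define K where "K = max r 0 + 2"
    have K: "K > 0" "K - 1 > r" unfolding K_def by auto
    obtain \<delta> where \<delta>: "\<delta> > 0" "\<And>e. e \<le> \<delta> \<Longrightarrow> measure M {\<omega>\<in>space M. \<bar>(Z h \<omega> - Z 0 \<omega>) - x0\<bar> \<le> e} < 1/4"
      using small_ball_small[OF assms(4) dZm _ Znull, of "1/4"] by auto
    obtain T1 where T1: "\<And>t. t \<ge> T1 \<Longrightarrow> measure M {\<omega>\<in>space M. t < \<bar>B h \<omega> - B 0 \<omega>\<bar>} < 1/4"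
      using tail_small[OF assms(4) dBm, of "1/4"] by auto
    obtain T2 where T2: "\<And>t. t \<ge> T2 \<Longrightarrow> measure N {\<omega>\<in>space N. t < \<bar>W h \<omega> - W 0 \<omega>\<bar>} < exp (-2*K) / 2"
      using tail_small[OF assms(8) dWm, of "exp (-2*K) / 2"] by auto
    have ev: "eventually (\<lambda>\<alpha>. \<alpha> > 0 \<and> sqrt \<alpha> \<ge> max (max T1 T2) (2/\<delta>)) at_top"
      using eventually_gt_at_top[of 0] filterlim_at_top[THEN iffD1, OF sqrt_at_top, rule_format, of "max (max T1 T2) (2/\<delta>)"]
      by eventually_elim auto
    show "eventually (\<lambda>\<alpha>. ereal r < rel_entropy
            (restr_to_subalg (distr M path_space (path_of (\<lambda>t \<omega>. \<alpha> * Z t \<omega> + B t \<omega>))) (incr_sigma n))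
            (restr_to_subalg (distr N path_space (path_of (\<lambda>t \<omega>. W t \<omega> - \<mu> * \<alpha> / \<sigma> * t))) (incr_sigma n))) at_top"
      using ev
    proof eventually_elim
      case (elim \<alpha>)
      then have a0: "\<alpha> > 0" and sT1: "sqrt \<alpha> \<ge> T1" and sT2: "sqrt \<alpha> \<ge> T2" and sd: "sqrt \<alpha> \<ge> 2/\<delta>" by auto
      have sp: "sqrt \<alpha> > 0" using a0 by simp
      have e\<delta>: "2 / sqrt \<alpha> \<le> \<delta>" using sd sp \<delta>(1) by (simp add: field_simps)
      define Xa where "Xa = (\<lambda>t \<omega>. \<alpha> * Z t \<omega> + B t \<omega>)"
      define Yd where "Yd = (\<lambda>t \<omega>. W t \<omega> - \<mu> * \<alpha> / \<sigma> * t)"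
      define P1 where "P1 = distr M path_space (path_of Xa)"
      define P2 where "P2 = distr N path_space (path_of Yd)"
      define S where "S = space path_space"
      define A where "A = {y \<in> space (PiM {..<n} (\<lambda>_. borel)). sqrt \<alpha> < \<bar>y 0 + \<mu> * \<alpha> / \<sigma> * h\<bar>}"
      define F where "F = incr_vec n -` A \<inter> S"
      have Xam: "path_of Xa \<in> measurable M path_space"
        unfolding Xa_def by (intro path_of_meas borel_measurable_add borel_measurable_times borel_measurable_const Zm Bm)
      have Ydm: "path_of Yd \<in> measurable N path_space"
        unfolding Yd_def by (intro path_of_meas borel_measurable_diff borel_measurable_const Wm)
      have sub1: "subalgebra P1 (incr_sigma n)" unfolding P1_def by (rule subalg_incr[OF Xam])
      have sub2: "subalgebra P2 (incr_sigma n)" unfolding P2_def by (rule subalg_incr[OF Ydm])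
      have Asets: "A \<in> sets (PiM {..<n} (\<lambda>_. borel))"
      proof -
        have z: "0 \<in> {..<n}" using assms(10) by simp
        have "(\<lambda>y::nat\<Rightarrow>real. y 0) \<in> borel_measurable (PiM {..<n} (\<lambda>_. borel))"
          by (rule measurable_component_singleton[where M="\<lambda>_. borel", simplified]) (rule z)
        then have "(\<lambda>y::nat\<Rightarrow>real. \<bar>y 0 + \<mu> * \<alpha> / \<sigma> * h\<bar>) \<in> borel_measurable (PiM {..<n} (\<lambda>_. borel))"
          by measurable
        then show ?thesis unfolding A_def by measurable
      qed
      have FS: "F \<in> sets (incr_sigma n)" unfolding F_def S_def incr_sigma_def by (rule in_vimage_algebra[OF Asets])
      have SS: "S \<in> sets (incr_sigma n)" unfolding S_def incr_sigma_def by (rule sets_vimage_algebra_space)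
      have CS: "S - F \<in> sets (incr_sigma n)" using FS SS by auto
      have FP: "F \<in> sets path_space" "S - F \<in> sets path_space"
        using FS CS sets_image_in_sets[OF refl incr_vec_meas, of n] unfolding incr_sigma_def by auto
      have n0: "n > 0" using assms(10) by simp
      have inA: "\<And>\<omega>. \<omega> \<in> S \<Longrightarrow> \<omega> \<in> F \<longleftrightarrow> sqrt \<alpha> < \<bar>\<omega> h - \<omega> 0 + \<mu> * \<alpha> / \<sigma> * h\<bar>"
      proof -
        fix \<omega> assume w: "\<omega> \<in> S"
        have "incr_vec n \<omega> \<in> space (PiM {..<n} (\<lambda>_. borel))"
          using incr_vec_meas[of n] w unfolding S_def measurable_def by auto
        moreover have "incr_vec n \<omega> 0 = \<omega> h - \<omega> 0" using incr0[OF n0] w unfolding S_def h_def by auto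
        ultimately show "\<omega> \<in> F \<longleftrightarrow> sqrt \<alpha> < \<bar>\<omega> h - \<omega> 0 + \<mu> * \<alpha> / \<sigma> * h\<bar>"
          using w unfolding F_def A_def by auto
      qed
      have pth: "\<And>X \<omega>. path_of X \<omega> \<in> S" unfolding S_def path_of_def path_space_def by (auto simp: space_PiM)
      have pv: "\<And>X \<omega>. path_of X \<omega> h = X h \<omega>" "\<And>X \<omega>. path_of X \<omega> 0 = X 0 \<omega>"
        using h01 by (auto simp: path_of_def)
      define p where "p = measure M {\<omega>\<in>space M. sqrt \<alpha> < \<bar>\<alpha> * (Z h \<omega> - Z 0 \<omega>) + (B h \<omega> - B 0 \<omega>) + \<mu> * \<alpha> / \<sigma> * h\<bar>}"
      define q where "q = measure N {\<omega>\<in>space N. sqrt \<alpha> < \<bar>W h \<omega> - W 0 \<omega>\<bar>}"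
      have p_eq: "measure (restr_to_subalg P1 (incr_sigma n)) F = p"
      proof -
        have "measure (restr_to_subalg P1 (incr_sigma n)) F = measure P1 F" by (rule measure_restr[OF sub1 FS])
        also have "\<dots> = measure M (path_of Xa -` F \<inter> space M)" unfolding P1_def by (rule measure_distr[OF Xam FP(1)])
        also have "path_of Xa -` F \<inter> space M = {\<omega>\<in>space M. sqrt \<alpha> < \<bar>\<alpha> * (Z h \<omega> - Z 0 \<omega>) + (B h \<omega> - B 0 \<omega>) + \<mu> * \<alpha> / \<sigma> * h\<bar>}"
        proof -
          have "\<And>\<omega>. path_of Xa \<omega> \<in> F \<longleftrightarrow> sqrt \<alpha> < \<bar>\<alpha> * (Z h \<omega> - Z 0 \<omega>) + (B h \<omega> - B 0 \<omega>) + \<mu> * \<alpha> / \<sigma> * h\<bar>"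
          proof -
            fix \<omega>
            have "Xa h \<omega> - Xa 0 \<omega> + \<mu> * \<alpha> / \<sigma> * h = \<alpha> * (Z h \<omega> - Z 0 \<omega>) + (B h \<omega> - B 0 \<omega>) + \<mu> * \<alpha> / \<sigma> * h"
              by (simp add: Xa_def algebra_simps)
            then show "path_of Xa \<omega> \<in> F \<longleftrightarrow> sqrt \<alpha> < \<bar>\<alpha> * (Z h \<omega> - Z 0 \<omega>) + (B h \<omega> - B 0 \<omega>) + \<mu> * \<alpha> / \<sigma> * h\<bar>"
              using inA[OF pth[of Xa \<omega>]] pv(1)[of Xa \<omega>] pv(2)[of Xa \<omega>] by simp
          qed
          then show ?thesis by blast
        qed
        finally show ?thesis unfolding p_def .
      qed
      have q_eq: "measure (restr_to_subalg P2 (incr_sigma n)) F = q"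
      proof -
        have "measure (restr_to_subalg P2 (incr_sigma n)) F = measure P2 F" by (rule measure_restr[OF sub2 FS])
        also have "\<dots> = measure N (path_of Yd -` F \<inter> space N)" unfolding P2_def by (rule measure_distr[OF Ydm FP(1)])
        also have "path_of Yd -` F \<inter> space N = {\<omega>\<in>space N. sqrt \<alpha> < \<bar>W h \<omega> - W 0 \<omega>\<bar>}"
        proof -
          have "\<And>\<omega>. path_of Yd \<omega> \<in> F \<longleftrightarrow> sqrt \<alpha> < \<bar>W h \<omega> - W 0 \<omega>\<bar>"
          proof -
            fix \<omega>
            have "Yd h \<omega> - Yd 0 \<omega> + \<mu> * \<alpha> / \<sigma> * h = W h \<omega> - W 0 \<omega>"
              by (simp add: Yd_def algebra_simps)
            then show "path_of Yd \<omega> \<in> F \<longleftrightarrow> sqrt \<alpha> < \<bar>W h \<omega> - W 0 \<omega>\<bar>"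
              using inA[OF pth[of Yd \<omega>]] pv(1)[of Yd \<omega>] pv(2)[of Yd \<omega>] by simp
          qed
          then show ?thesis by blast
        qed
        finally show ?thesis unfolding q_def .
      qed
      have q'_le: "measure (restr_to_subalg P2 (incr_sigma n)) (S - F) \<le> 1"
      proof -
        have "measure (restr_to_subalg P2 (incr_sigma n)) (S - F) = measure P2 (S - F)" by (rule measure_restr[OF sub2 CS])
        also have "\<dots> \<le> 1" unfolding P2_def using PN.prob_space_distr[OF Ydm] by (simp add: prob_space.prob_le_1)
        finally show ?thesis .
      qed
      define EA where "EA = {\<omega>\<in>space M. \<bar>(Z h \<omega> - Z 0 \<omega>) - x0\<bar> \<le> 2 / sqrt \<alpha>}"
      define EB where "EB = {\<omega>\<in>space M. sqrt \<alpha> < \<bar>B h \<omega> - B 0 \<omega>\<bar>}"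
      have EAs: "EA \<in> sets M" unfolding EA_def
        by (rule set_le_abs) (intro borel_measurable_diff borel_measurable_const dZm)
      have EBs: "EB \<in> sets M" unfolding EB_def by (rule set_lt_abs[OF dBm])
      have Ps: "{\<omega>\<in>space M. sqrt \<alpha> < \<bar>\<alpha> * (Z h \<omega> - Z 0 \<omega>) + (B h \<omega> - B 0 \<omega>) + \<mu> * \<alpha> / \<sigma> * h\<bar>} \<in> sets M"
        by (rule set_lt_abs) (intro borel_measurable_add borel_measurable_times borel_measurable_const dZm dBm)
      have pA: "measure M EA < 1/4" unfolding EA_def by (rule \<delta>(2)[OF e\<delta>])
      have pB: "measure M EB < 1/4" unfolding EB_def by (rule T1) (use sT1 in auto)
      have sub: "space M - (EA \<union> EB) \<subseteq> {\<omega>\<in>space M. sqrt \<alpha> < \<bar>\<alpha> * (Z h \<omega> - Z 0 \<omega>) + (B h \<omega> - B 0 \<omega>) + \<mu> * \<alpha> / \<sigma> * h\<bar>}"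
      proof
        fix \<omega> assume w: "\<omega> \<in> space M - (EA \<union> EB)"
        then have w1: "\<omega> \<in> space M" and w2: "2 / sqrt \<alpha> < \<bar>(Z h \<omega> - Z 0 \<omega>) - x0\<bar>"
          and w3: "\<bar>B h \<omega> - B 0 \<omega>\<bar> \<le> sqrt \<alpha>" unfolding EA_def EB_def by auto
        have "\<mu> * \<alpha> / \<sigma> * h = - \<alpha> * x0" by (simp add: x0_def)
        then have "sqrt \<alpha> < \<bar>\<alpha> * (Z h \<omega> - Z 0 \<omega>) + (B h \<omega> - B 0 \<omega>) + \<mu> * \<alpha> / \<sigma> * h\<bar>"
          by (rule key_ineq[OF a0 w2 w3])
        then show "\<omega> \<in> {\<omega>\<in>space M. sqrt \<alpha> < \<bar>\<alpha> * (Z h \<omega> - Z 0 \<omega>) + (B h \<omega> - B 0 \<omega>) + \<mu> * \<alpha> / \<sigma> * h\<bar>}"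
          using w1 by blast
      qed
      have "p \<ge> measure M (space M - (EA \<union> EB))" unfolding p_def
        using sub Ps by (rule PM.finite_measure_mono)
      moreover have "measure M (space M - (EA \<union> EB)) = 1 - measure M (EA \<union> EB)"
        using EAs EBs by (intro PM.prob_compl) auto
      moreover have "measure M (EA \<union> EB) \<le> measure M EA + measure M EB"
        using EAs EBs by (rule measure_Un_le)
      ultimately have p2: "p \<ge> 1/2" using pA pB by linarith
      have q2: "q < exp (-2*K) / 2" unfolding q_def by (rule T2) (use sT2 in auto)
      have k1: "kl_term p q \<ge> ereal K" by (rule kl_big[OF p2 _ q2 K(1)]) (simp add: q_def)
      have k2: "kl_term (measure (restr_to_subalg P1 (incr_sigma n)) (S - F)) (measure (restr_to_subalg P2 (incr_sigma n)) (S - F)) \<ge> ereal (-1)"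
        by (rule kl_lower[OF _ _ q'_le]) auto
      define Q1 where "Q1 = restr_to_subalg P1 (incr_sigma n)"
      define Q2 where "Q2 = restr_to_subalg P2 (incr_sigma n)"
      have part: "finite_meas_partition Q1 {F, S - F}"
      proof -
        have sQ: "sets Q1 = sets (incr_sigma n)" unfolding Q1_def by (rule sets_restr_to_subalg[OF sub1])
        have spQ: "space Q1 = S" unfolding Q1_def P1_def S_def by (simp add: space_restr_to_subalg)
        have FsubS: "F \<subseteq> S" unfolding F_def by blast
        have dj: "disjoint {F, S - F}" unfolding disjoint_def disjnt_def by auto
        show ?thesis unfolding finite_meas_partition_def sQ spQ using FS CS FsubS dj by auto
      qed
      have sumge: "(\<Sum>G\<in>{F, S - F}. kl_term (measure Q1 G) (measure Q2 G)) \<ge> ereal (K - 1)"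
      proof (cases "F = S - F")
        case True
        then have "{F, S - F} = {F}" by auto
        moreover have "ereal (K - 1) \<le> kl_term p q" using k1 by (rule order_trans[rotated]) simp
        ultimately show ?thesis using p_eq q_eq unfolding Q1_def Q2_def by simp
      next
        case False
        then have "(\<Sum>G\<in>{F, S - F}. kl_term (measure Q1 G) (measure Q2 G)) =
          kl_term (measure Q1 F) (measure Q2 F) + kl_term (measure Q1 (S - F)) (measure Q2 (S - F))"
          by (subst sum.insert) auto
        moreover have "ereal K + ereal (-1) \<le> kl_term (measure Q1 F) (measure Q2 F) + kl_term (measure Q1 (S - F)) (measure Q2 (S - F))"
        proof (rule add_mono)
          show "ereal K \<le> kl_term (measure Q1 F) (measure Q2 F)" unfolding Q1_def Q2_def p_eq q_eq by (rule k1)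
          show "ereal (-1) \<le> kl_term (measure Q1 (S - F)) (measure Q2 (S - F))" unfolding Q1_def Q2_def by (rule k2)
        qed
        moreover have "ereal K + ereal (-1) = ereal (K - 1)" by simp
        ultimately show ?thesis by simp
      qed
      have "rel_entropy Q1 Q2 \<ge> (\<Sum>G\<in>{F, S - F}. kl_term (measure Q1 G) (measure Q2 G))"
        unfolding rel_entropy_def using part by (intro SUP_upper) auto
      moreover have "ereal r < ereal (K - 1)" using K(2) by simp
      ultimately have "rel_entropy Q1 Q2 > ereal r" using sumge
        by (meson less_le_trans order_trans)
      then show ?case unfolding Q1_def Q2_def P1_def P2_def Xa_def Yd_def .
    qed
  qed
qed


end
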